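(* Let $n\ge1$ and $\alpha=\beta=1$. The stationary measure of the $n$-site open-boundary TASEP is given by $$\mathbb{P}^{\mathrm{st}}_n\{\mathcal{C}\}=\frac{|R^{-1}\{\mathcal{C}\}|}{|\mathcal{T}_n|}.$$ Equivalently, for every $\mathcal{C}\in\{\bullet,\circ\}^n$, $$|R^{-1}\{\mathcal{C}\}|\sum_{\mathcal{C}'}W(\mathcal{C}\to\mathcal{C}')=\sum_{\mathcal{C}'}|R^{-1}\{\mathcal{C}'\}|\,W(\mathcal{C}'\to\mathcal{C}).$$
   Context: Open-boundary TASEP on $n$ sites: this is the continuous-time Markov chain on $\{\bullet,\circ\}^n$ (strings of length $n$, where $\bullet$ denotes a particle and $\circ$ a hole). Its transition rates are as follows, with $\mathcal{A},\mathcal{A}'$ arbitrary strings: - $W(\circ\mathcal{A}\to\bullet\mathcal{A})=\alpha$; - $W(\mathcal{A}\bullet\to\mathcal{A}\circ)=\beta$; - $W(\mathcal{A}\bullet\circ\mathcal{A}'\to\mathcal{A}\circ\bullet\mathcal{A}')=1$; - $W(\mathcal{C}\to\mathcal{C}')=0$ for all other pairs. A plane binary tree is a finite rooted tree in which every vertex is either an endpoint (a leaf, with no children) or has exactly two children, an ordered left child and right child. Every non-root vertex is thus either a left descendent or a right descendent of its parent. The endpoints are ordered from left to right in the planar order. $\mathcal{T}_n$ denotes the set of plane binary trees with exactly $n+2$ endpoints. The reduced configuration of $T\in\mathcal{T}_n$ is $R(T)=(t_1,\dots,t_n)\in\{\bullet,\circ\}^n$. Here $t_k=\bullet$ if the $(k+1)$-th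 endpoint from the left is a left child, and $t_k=\circ$ if it is a right child. The leftmost and rightmost endpoints are ignored. *)

theory Defs
  imports Complex_Main
begin

text \<open>Configurations of the n-site TASEP: lists of booleans of length n,
  True = particle (bullet), False = hole (circ).\<close>

type_synonym config = "bool list"

definition W :: "real \<Rightarrow> real \<Rightarrow> config \<Rightarrow> config \<Rightarrow> real" where
  "W \<alpha> \<beta> C C' =
     (if C \<noteq> [] \<and> C' \<noteq> [] \<and> hd C = False \<and> C' = True # tl C then \<alpha> else 0)
   + (if C \<noteq> [] \<and> C' \<noteq> [] \<and> last C = True \<and> C' = butlast C @ [False] then \<beta> else 0)
   + (if \<exists>A A'. C = A @ [True, False] @ A' \<and> C' = A @ [False, True] @ A' then 1 else 0)"

datatype ptree = Leaf | Node ptree ptree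

text \<open>Endpoints from left to right, each tagged with True iff it is a left child
  (the flag passed in is the tag of the current vertex; the root gets an arbitrary tag).\<close>
fun leaf_tags :: "bool \<Rightarrow> ptree \<Rightarrow> bool list" where
  "leaf_tags b Leaf = [b]"
| "leaf_tags b (Node l r) = leaf_tags True l @ leaf_tags False r"

definition num_leaves :: "ptree \<Rightarrow> nat" where
  "num_leaves t = length (leaf_tags False t)"

definition trees :: "nat \<Rightarrow> ptree set" where
  "trees n = {t. num_leaves t = n + 2}"

definition reduced :: "ptree \<Rightarrow> config" where
  "reduced t = butlast (tl (leaf_tags False t))"

definition configs :: "nat \<Rightarrow> config set" where
  "configs n = {C. length C = n}"

definition preimage_count :: "nat \<Rightarrow> config \<Rightarrow> nat" where
  "preimage_count n C = card {t \<in> trees n. reduced t = C}"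

end

theory Submission
  imports Defs
begin

fun lc :: "ptree \<Rightarrow> nat" where
  "lc Leaf = 1" | "lc (Node l r) = lc l + lc r"

lemma len_lt: "length (leaf_tags b t) = lc t"
  by (induction t arbitrary: b) auto

lemma lc_pos: "lc t > 0" by (induction t) auto

lemma lt_ne: "leaf_tags b t \<noteq> []"
  using len_lt[of b t] lc_pos[of t] by auto

lemma hd_lt: "hd (leaf_tags True t) = True"
  by (induction t) (auto simp: lt_ne)

lemma last_lt: "last (leaf_tags False t) = False"
  by (induction t) (auto simp: lt_ne)

lemma node_shape: "\<exists>xs. leaf_tags b (Node l r) = True # xs @ [False]"
proof -
  obtain a xs where a: "leaf_tags True l = a # xs" using lt_ne[of True l] by (cases "leaf_tags True l") auto
  have "a = True" using hd_lt[of l] a by simp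
  obtain ys z where z: "leaf_tags False r = ys @ [z]" using lt_ne[of False r] by (cases "leaf_tags False r" rule: rev_cases) auto
  have "z = False" using last_lt[of r] z by simp
  show ?thesis using a z \<open>a = True\<close> \<open>z = False\<close> by auto
qed

lemma finite_lc: "finite {t. lc t \<le> m}"
proof (induction m)
  case 0
  have "{t. lc t \<le> 0} = {}" using lc_pos by (metis (mono_tags) empty_Collect_eq le_zero_eq not_gr0)
  then show ?case by (metis finite.emptyI)
next
  case (Suc m)
  have "{t. lc t \<le> Suc m} \<subseteq> insert Leaf ((\<lambda>(l,r). Node l r) ` ({t. lc t \<le> m} \<times> {t. lc t \<le> m}))"
  proof
    fix t assume "t \<in> {t. lc t \<le> Suc m}"
    then show "t \<in> insert Leaf ((\<lambda>(l,r). Node l r) ` ({t. lc t \<le> m} \<times> {t. lc t \<le> m}))"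
    proof (cases t)
      case (Node l r)
      have "lc l \<le> m" "lc r \<le> m" using \<open>t \<in> _\<close> Node lc_pos[of l] lc_pos[of r] by auto
      then show ?thesis using Node by (auto intro!: image_eqI[where x="(l,r)"])
    qed simp
  qed
  then show ?case using Suc by (meson finite_SigmaI finite_imageI finite_insert finite_subset)
qed

lemma finite_word: "finite {t. leaf_tags b t = w}"
  by (rule finite_subset[OF _ finite_lc[of "length w"]]) (auto simp: len_lt)

fun expand :: "nat \<Rightarrow> ptree \<Rightarrow> ptree" where
  "expand k Leaf = Node Leaf Leaf"
| "expand k (Node l r) = (if k < lc l then Node (expand k l) r else Node l (expand (k - lc l) r))"

fun contract :: "nat \<Rightarrow> ptree \<Rightarrow> ptree" where
  "contract k Leaf = Leaf"
| "contract k (Node l r) = (if l = Leaf \<and> r = Leaf \<and> k = 0 then Leaf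
     else if k < lc l then Node (contract k l) r else Node l (contract (k - lc l) r))"

lemma expand_ne: "expand k t \<noteq> Leaf" by (cases t) auto
lemma lc_expand: "lc (expand k t) = Suc (lc t)"
  by (induction k t rule: expand.induct) auto

lemma E1: "k < lc t \<Longrightarrow> leaf_tags b (expand k t) =
   take k (leaf_tags b t) @ [True, False] @ drop (Suc k) (leaf_tags b t)"
proof (induction k t arbitrary: b rule: expand.induct)
  case (1 k) then show ?case by simp
next
  case (2 k l r)
  show ?case
  proof (cases "k < lc l")
    case True then show ?thesis using 2 by (simp add: len_lt)
  next
    case False then show ?thesis using 2 by (simp add: len_lt Suc_diff_le)
  qed
qed

lemma contract_expand: "k < lc t \<Longrightarrow> contract k (expand k t) = t"
  by (induction k t rule: expand.induct) (auto simp: expand_ne lc_expand)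

lemma expand_contract: "Suc k < length (leaf_tags b s) \<Longrightarrow> leaf_tags b s ! k = True \<Longrightarrow>
  leaf_tags b s ! Suc k = False \<Longrightarrow> k < lc (contract k s) \<and> expand k (contract k s) = s"
proof (induction k s arbitrary: b rule: contract.induct)
  case (1 k) then show ?case by simp
next
  case (2 k l r)
  show ?case
  proof (cases "l = Leaf \<and> r = Leaf \<and> k = 0")
    case True then show ?thesis by simp
  next
    case nl: False
    show ?thesis
    proof (cases "k < lc l")
      case True
      show ?thesis
      proof (cases "Suc k < lc l")
        case True
        then have "k < lc (contract k l) \<and> expand k (contract k l) = l"
          using 2(1)[of True] nl \<open>k < lc l\<close> 2(3-5) by (simp add: len_lt nth_append)
        then show ?thesis using nl \<open>k < lc l\<close> by simp
      next
        case False
        then have sk: "Suc k = lc l" using \<open>k < lc l\<close> by simp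
        have hr: "hd (leaf_tags False r) = False"
          using 2(5) sk by (simp add: nth_append len_lt hd_conv_nth lt_ne)
        have rl: "r = Leaf"
        proof (cases r)
          case (Node a b) then show ?thesis using hr hd_lt[of a] by (simp add: lt_ne)
        qed simp
        have ll: "last (leaf_tags True l) = True"
          using 2(4) sk[symmetric] by (simp add: nth_append len_lt last_conv_nth lt_ne)
        have "l = Leaf"
        proof (cases l)
          case (Node a b) then show ?thesis using ll last_lt[of b] by (simp add: lt_ne)
        qed simp
        then show ?thesis using rl sk nl by simp
      qed
    next
      case False
      have "k - lc l < lc (contract (k - lc l) r) \<and> expand (k - lc l) (contract (k - lc l) r) = r"
        using 2(2)[of False] nl False 2(3-5)
        by (simp add: len_lt nth_append Suc_diff_le)
      moreover have "k < lc l + lc (contract (k - lc l) r)" using calculation False by linarith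
      ultimately show ?thesis using nl False by simp
    qed
  qed
qed

definition F :: "config \<Rightarrow> nat" where
  "F C = card {t. leaf_tags False t = True # C @ [False]}"

lemma split_count:
  "card {t. leaf_tags False t = X @ [True, False] @ Y} =
   card {t. leaf_tags False t = X @ [True] @ Y} + card {t. leaf_tags False t = X @ [False] @ Y}"
proof -
  define k where "k = length X"
  define S1 where "S1 = {t. leaf_tags False t = X @ [True] @ Y}"
  define S2 where "S2 = {t. leaf_tags False t = X @ [False] @ Y}"
  have ltS: "k < lc t" if "t \<in> S1 \<union> S2" for t
    using that len_lt[of False t] unfolding S1_def S2_def k_def by auto
  have eq: "{t. leaf_tags False t = X @ [True, False] @ Y} = expand k ` (S1 \<union> S2)"
  proof (rule set_eqI, rule iffI)
    fix s assume "s \<in> {t. leaf_tags False t = X @ [True, False] @ Y}"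
    hence w: "leaf_tags False s = X @ [True, False] @ Y" by simp
    then have c: "k < lc (contract k s) \<and> expand k (contract k s) = s"
      by (intro expand_contract[of _ False]) (simp_all add: nth_append k_def)
    define t where "t = contract k s"
    have kl: "k < length (leaf_tags False t)" using c len_lt t_def by simp
    have e1: "leaf_tags False s = take k (leaf_tags False t) @ [True, False] @ drop (Suc k) (leaf_tags False t)"
      using E1[of k t False] c t_def by simp
    have lt: "length (take k (leaf_tags False t)) = length X" using kl k_def by simp
    have tk: "take k (leaf_tags False t) = X" and dr: "drop (Suc k) (leaf_tags False t) = Y"
      using e1 w lt by (metis append_eq_append_conv list.inject)+
    have "leaf_tags False t = X @ [leaf_tags False t ! k] @ Y"
      using tk dr id_take_nth_drop[OF kl] by simp
    then have "t \<in> S1 \<union> S2" unfolding S1_def S2_def by (cases "leaf_tags False t ! k") auto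
    then show "s \<in> expand k ` (S1 \<union> S2)" using c t_def by (metis image_eqI)
  next
    fix s assume "s \<in> expand k ` (S1 \<union> S2)"
    then obtain t where t: "t \<in> S1 \<union> S2" "s = expand k t" by blast
    have "leaf_tags False s = take k (leaf_tags False t) @ [True, False] @ drop (Suc k) (leaf_tags False t)"
      using E1[of k t False] ltS[OF t(1)] t(2) by simp
    then show "s \<in> {t. leaf_tags False t = X @ [True, False] @ Y}"
      using t(1) unfolding S1_def S2_def k_def by auto
  qed
  have inj: "inj_on (expand k) (S1 \<union> S2)"
    by (rule inj_on_inverseI[where g="contract k"]) (simp add: contract_expand ltS)
  have "card (S1 \<union> S2) = card S1 + card S2"
    by (rule card_Un_disjoint) (auto simp: S1_def S2_def finite_word)
  then show ?thesis using eq card_image[OF inj] S1_def S2_def by simp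
qed

lemma R1: "F (A @ [True, False] @ B) = F (A @ [True] @ B) + F (A @ [False] @ B)"
  using split_count[of "True # A" "B @ [False]"] unfolding F_def by simp

lemma R2: "F (False # B) = F B"
proof -
  have e: "{t. leaf_tags False t = [] @ [False] @ (B @ [False])} = {}"
  proof -
    have "leaf_tags False t \<noteq> False # B @ [False]" for t
    proof (cases t)
      case (Node l r) then show ?thesis using node_shape[of False l r] by auto
    qed simp
    then show ?thesis by auto
  qed
  show ?thesis using split_count[of "[]" "B @ [False]"] e unfolding F_def by simp
qed

lemma R3: "F (A @ [True]) = F A"
proof -
  have e: "{t. leaf_tags False t = (True # A) @ [True] @ []} = {}"
  proof -
    have "leaf_tags False t \<noteq> True # A @ [True]" for t
    proof (cases t)
      case (Node l r) then show ?thesis using node_shape[of False l r] by auto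
    qed simp
    then show ?thesis by auto
  qed
  show ?thesis using split_count[of "True # A" "[]"] e unfolding F_def by simp
qed

lemma pc_F: "length C = n \<Longrightarrow> preimage_count n C = F C"
proof -
  assume n: "length C = n"
  have "{t \<in> trees n. reduced t = C} = {t. leaf_tags False t = True # C @ [False]}"
  proof (rule set_eqI, rule iffI)
    fix t assume a: "t \<in> {t \<in> trees n. reduced t = C}"
    then have l: "length (leaf_tags False t) = n + 2" by (simp add: trees_def num_leaves_def)
    then obtain l r where "t = Node l r" by (cases t) auto
    then obtain xs where xs: "leaf_tags False t = True # xs @ [False]" using node_shape by blast
    then show "t \<in> {t. leaf_tags False t = True # C @ [False]}" using a by (simp add: reduced_def)
  next
    fix t assume "t \<in> {t. leaf_tags False t = True # C @ [False]}"
    then show "t \<in> {t \<in> trees n. reduced t = C}" using n by (simp add: reduced_def trees_def num_leaves_def)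
  qed
  then show ?thesis by (simp add: preimage_count_def F_def)
qed

definition fr :: "config \<Rightarrow> real" where "fr D = real (F D)"
definition sg :: "bool \<Rightarrow> real" where "sg b = (if b then 1 else -1)"

lemma decomp: "Suc i < length C \<Longrightarrow> C = take i C @ [C!i, C!Suc i] @ drop (Suc (Suc i)) C"
proof -
  assume a: "Suc i < length C"
  have "drop i C = C!i # C!Suc i # drop (Suc (Suc i)) C"
    using a by (metis Cons_nth_drop_Suc Suc_lessD)
  then show ?thesis by (metis append_Cons append_Nil append_take_drop_id)
qed

lemma fin_configs: "finite (configs n)"
proof -
  have "configs n = {xs. set xs \<subseteq> (UNIV::bool set) \<and> length xs = n}" by (auto simp: configs_def)
  then show ?thesis using finite_lists_length_eq[of "UNIV::bool set" n] by simp
qed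

lemma sum_delta_cond: "finite S \<Longrightarrow> (\<Sum>x\<in>S. if x = a \<and> P then g x else 0) = (if a \<in> S \<and> P then g a else (0::real))"
  by (cases P) (simp_all add: sum.delta)

lemma swap_sum:
  fixes g :: "config \<Rightarrow> real"
  assumes "x \<noteq> y" "length C = n"
  shows "(\<Sum>C'\<in>configs n. if \<exists>A A'. C = A @ [x,y] @ A' \<and> C' = A @ [y,x] @ A' then g C' else 0)
    = (\<Sum>i<n-1. if C!i = x \<and> C!Suc i = y then g (take i C @ [y,x] @ drop (Suc (Suc i)) C) else 0)"
proof -
  define s where "s i = take i C @ [y,x] @ drop (Suc (Suc i)) C" for i
  define I where "I = {i\<in>{..<n-1}. C!i = x \<and> C!Suc i = y}"
  have cond: "(\<exists>A A'. C = A @ [x,y] @ A' \<and> C' = A @ [y,x] @ A') \<longleftrightarrow> C' \<in> s ` I" for C'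
  proof
    assume "\<exists>A A'. C = A @ [x,y] @ A' \<and> C' = A @ [y,x] @ A'"
    then obtain A A' where h: "C = A @ [x,y] @ A'" "C' = A @ [y,x] @ A'" by blast
    have "length A \<in> I" using h assms(2) by (auto simp: I_def nth_append)
    moreover have "C' = s (length A)" using h by (simp add: s_def)
    ultimately show "C' \<in> s ` I" by blast
  next
    assume "C' \<in> s ` I"
    then obtain i where i: "i \<in> I" "C' = s i" by blast
    then have "Suc i < length C" using assms(2) by (auto simp: I_def)
    from decomp[OF this] i have "C = take i C @ [x,y] @ drop (Suc (Suc i)) C" by (simp add: I_def)
    then show "\<exists>A A'. C = A @ [x,y] @ A' \<and> C' = A @ [y,x] @ A'" using i(2) s_def by blast
  qed
  have sub: "s ` I \<subseteq> configs n" using assms(2) by (auto simp: s_def I_def configs_def)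
  have inj: "inj_on s I"
  proof (rule inj_onI)
    fix i j assume ij: "i \<in> I" "j \<in> I" "s i = s j"
    have nth1: "s a ! a = y" if "a \<in> I" for a using that assms(2) by (auto simp: s_def I_def nth_append)
    have nth2: "s b ! a = x" if "a \<in> I" "b \<in> I" "a < b" for a b
      using that assms(2) by (auto simp: s_def I_def nth_append)
    show "i = j"
    proof (rule ccontr)
      assume "i \<noteq> j"
      then consider "i < j" | "j < i" by linarith
      then show False
      proof cases
        case 1 then show False using nth1[OF ij(1)] nth2[OF ij(1) ij(2)] ij(3) assms(1) by simp
      next
        case 2 then show False using nth1[OF ij(2)] nth2[OF ij(2) ij(1)] ij(3) assms(1) by simp
      qed
    qed
  qed
  have "(\<Sum>C'\<in>configs n. if \<exists>A A'. C = A @ [x,y] @ A' \<and> C' = A @ [y,x] @ A' then g C' else 0)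
      = (\<Sum>C'\<in>configs n. if C' \<in> s ` I then g C' else 0)" using cond by simp
  also have "\<dots> = sum g (configs n \<inter> s ` I)" by (rule sum.inter_restrict[symmetric, OF fin_configs])
  also have "\<dots> = sum g (s ` I)" using sub by (simp add: Int_absorb1)
  also have "\<dots> = sum (g \<circ> s) I" by (rule sum.reindex[OF inj])
  also have "\<dots> = (\<Sum>i<n-1. if C!i = x \<and> C!Suc i = y then g (s i) else 0)"
    unfolding I_def o_def by (rule sum.inter_filter) simp
  finally show ?thesis unfolding s_def .
qed

lemma bond_gen: "(if x = False \<and> y = True then fr (A@[True,False]@B) else 0)
   - (if x = True \<and> y = False then fr (A@[x,y]@B) else 0) = sg y * fr (A@[x]@B) - sg x * fr (A@[y]@B)"
  using R1[of A B] by (cases x; cases y) (simp_all add: sg_def fr_def)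

lemma Lsum:
  assumes "length C = n" "n \<ge> 1"
  shows "(\<Sum>C'\<in>configs n. W 1 1 C C') = (if \<not> hd C then 1 else 0) + (if last C then 1 else 0)
     + (\<Sum>i<n-1. if C!i = True \<and> C!Suc i = False then 1 else 0)"
proof -
  have Cne: "C \<noteq> []" using assms by auto
  have a: "(\<Sum>C'\<in>configs n. if C \<noteq> [] \<and> C' \<noteq> [] \<and> hd C = False \<and> C' = True # tl C then 1 else 0)
     = (if \<not> hd C then 1 else (0::real))"
  proof -
    have "(\<Sum>C'\<in>configs n. if C \<noteq> [] \<and> C' \<noteq> [] \<and> hd C = False \<and> C' = True # tl C then 1 else 0)
       = (\<Sum>C'\<in>configs n. if C' = True # tl C \<and> \<not> hd C then 1 else (0::real))"
      by (rule sum.cong) (auto simp: Cne)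
    also have "\<dots> = (if \<not> hd C then 1 else (0::real))"
      by (subst sum_delta_cond[OF fin_configs]) (use assms Cne in \<open>auto simp: configs_def\<close>)
    finally show ?thesis .
  qed
  have b: "(\<Sum>C'\<in>configs n. if C \<noteq> [] \<and> C' \<noteq> [] \<and> last C = True \<and> C' = butlast C @ [False] then 1 else 0)
     = (if last C then 1 else (0::real))"
  proof -
    have "(\<Sum>C'\<in>configs n. if C \<noteq> [] \<and> C' \<noteq> [] \<and> last C = True \<and> C' = butlast C @ [False] then 1 else 0)
       = (\<Sum>C'\<in>configs n. if C' = butlast C @ [False] \<and> last C then 1 else (0::real))"
      by (rule sum.cong) (auto simp: Cne)
    also have "\<dots> = (if last C then 1 else (0::real))"
      by (subst sum_delta_cond[OF fin_configs]) (use assms Cne in \<open>auto simp: configs_def\<close>)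
    finally show ?thesis .
  qed
  have c: "(\<Sum>C'\<in>configs n. if \<exists>A A'. C = A @ [True, False] @ A' \<and> C' = A @ [False, True] @ A' then 1 else 0)
    = (\<Sum>i<n-1. if C!i = True \<and> C!Suc i = False then 1 else (0::real))"
    using swap_sum[of True False C n "\<lambda>_. 1"] assms by simp
  show ?thesis unfolding W_def sum.distrib a b c ..
qed

lemma Rsum:
  assumes "length C = n" "n \<ge> 1"
  shows "(\<Sum>C'\<in>configs n. real (preimage_count n C') * W 1 1 C' C) =
    (if hd C then fr (False # tl C) else 0) + (if \<not> last C then fr (butlast C @ [True]) else 0)
    + (\<Sum>i<n-1. if C!i = False \<and> C!Suc i = True then fr (take i C @ [True,False] @ drop (Suc (Suc i)) C) else 0)"
proof -
  have Cne: "C \<noteq> []" using assms by auto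
  have a: "(\<Sum>C'\<in>configs n. real (preimage_count n C') * (if C' \<noteq> [] \<and> C \<noteq> [] \<and> hd C' = False \<and> C = True # tl C' then 1 else 0))
     = (if hd C then fr (False # tl C) else 0)"
  proof -
    have "(\<Sum>C'\<in>configs n. real (preimage_count n C') * (if C' \<noteq> [] \<and> C \<noteq> [] \<and> hd C' = False \<and> C = True # tl C' then 1 else 0))
       = (\<Sum>C'\<in>configs n. if C' = False # tl C \<and> hd C then real (preimage_count n C') else 0)"
    proof (rule sum.cong)
      fix C' assume "C' \<in> configs n"
      then have "C' \<noteq> []" using assms by (auto simp: configs_def)
      then show "real (preimage_count n C') * (if C' \<noteq> [] \<and> C \<noteq> [] \<and> hd C' = False \<and> C = True # tl C' then 1 else 0)
        = (if C' = False # tl C \<and> hd C then real (preimage_count n C') else 0)"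
        using Cne by (cases C'; cases C) auto
    qed simp
    also have "\<dots> = (if hd C then fr (False # tl C) else 0)"
      by (subst sum_delta_cond[OF fin_configs]) (use assms Cne in \<open>auto simp: configs_def pc_F fr_def\<close>)
    finally show ?thesis .
  qed
  have b: "(\<Sum>C'\<in>configs n. real (preimage_count n C') * (if C' \<noteq> [] \<and> C \<noteq> [] \<and> last C' = True \<and> C = butlast C' @ [False] then 1 else 0))
     = (if \<not> last C then fr (butlast C @ [True]) else 0)"
  proof -
    have "(\<Sum>C'\<in>configs n. real (preimage_count n C') * (if C' \<noteq> [] \<and> C \<noteq> [] \<and> last C' = True \<and> C = butlast C' @ [False] then 1 else 0))
       = (\<Sum>C'\<in>configs n. if C' = butlast C @ [True] \<and> \<not> last C then real (preimage_count n C') else 0)"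
    proof (rule sum.cong)
      fix C' assume "C' \<in> configs n"
      then have "C' \<noteq> []" using assms by (auto simp: configs_def)
      then show "real (preimage_count n C') * (if C' \<noteq> [] \<and> C \<noteq> [] \<and> last C' = True \<and> C = butlast C' @ [False] then 1 else 0)
        = (if C' = butlast C @ [True] \<and> \<not> last C then real (preimage_count n C') else 0)"
        using Cne by (cases C' rule: rev_cases; cases C rule: rev_cases) auto
    qed simp
    also have "\<dots> = (if \<not> last C then fr (butlast C @ [True]) else 0)"
      by (subst sum_delta_cond[OF fin_configs]) (use assms Cne in \<open>auto simp: configs_def pc_F fr_def\<close>)
    finally show ?thesis .
  qed
  have c: "(\<Sum>C'\<in>configs n. real (preimage_count n C') * (if \<exists>A A'. C' = A @ [True, False] @ A' \<and> C = A @ [False, True] @ A' then 1 else 0))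
    = (\<Sum>i<n-1. if C!i = False \<and> C!Suc i = True then fr (take i C @ [True,False] @ drop (Suc (Suc i)) C) else 0)"
  proof -
    have "(\<Sum>C'\<in>configs n. real (preimage_count n C') * (if \<exists>A A'. C' = A @ [True, False] @ A' \<and> C = A @ [False, True] @ A' then 1 else 0))
      = (\<Sum>C'\<in>configs n. if \<exists>A A'. C = A @ [False, True] @ A' \<and> C' = A @ [True, False] @ A' then real (preimage_count n C') else 0)"
      by (rule sum.cong) auto
    also have "\<dots> = (\<Sum>i<n-1. if C!i = False \<and> C!Suc i = True then real (preimage_count n (take i C @ [True,False] @ drop (Suc (Suc i)) C)) else 0)"
      using swap_sum[of False True C n "\<lambda>C'. real (preimage_count n C')"] assms by simp
    also have "\<dots> = (\<Sum>i<n-1. if C!i = False \<and> C!Suc i = True then fr (take i C @ [True,False] @ drop (Suc (Suc i)) C) else 0)"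
      by (rule sum.cong) (use assms in \<open>auto simp: pc_F fr_def\<close>)
    finally show ?thesis .
  qed
  show ?thesis unfolding W_def distrib_left sum.distrib a b c ..
qed

theorem proposition2:
  fixes n :: nat and C :: config
  assumes "n \<ge> 1" and "C \<in> configs n"
  shows "real (preimage_count n C) * (\<Sum>C'\<in>configs n. W 1 1 C C')
       = (\<Sum>C'\<in>configs n. real (preimage_count n C') * W 1 1 C' C)"
proof -
  have n: "length C = n" using assms(2) by (simp add: configs_def)
  have Cne: "C \<noteq> []" using n assms(1) by auto
  define H where "H i = sg (C!i) * fr (take i C @ drop (Suc i) C)" for i
  define q where "q i = (if C!i = False \<and> C!Suc i = True then fr (take i C @ [True,False] @ drop (Suc (Suc i)) C) else 0)" for i
  define p where "p i = (if C!i = True \<and> C!Suc i = False then 1 else (0::real))" for i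
  have bond: "q i - fr C * p i = H (Suc i) - H i" if "i < n - 1" for i
  proof -
    have "Suc i < length C" using that n by simp
    obtain A x y B where CC: "C = A @ [x,y] @ B" "length A = i"
    proof (rule that[of "take i C" "C!i" "C!Suc i" "drop (Suc (Suc i)) C"])
      show "C = take i C @ [C!i, C!Suc i] @ drop (Suc (Suc i)) C" by (rule decomp) fact
      show "length (take i C) = i" using \<open>Suc i < length C\<close> by simp
    qed
    show ?thesis unfolding q_def p_def H_def CC(1)
      using R1[of A B] by (cases x; cases y) (simp_all add: CC(2) nth_append sg_def fr_def)
  qed
  have left: "(if hd C then fr (False # tl C) else 0) - fr C * (if \<not> hd C then 1 else 0) = H 0"
  proof -
    obtain x B where CC: "C = x # B" using Cne by (cases C) auto
    show ?thesis unfolding CC H_def using R2[of B] by (cases x) (simp_all add: sg_def fr_def)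
  qed
  have right: "(if \<not> last C then fr (butlast C @ [True]) else 0) - fr C * (if last C then 1 else 0) = - H (n - 1)"
  proof -
    obtain A y where CC: "C = A @ [y]" using Cne by (cases C rule: rev_cases) auto
    have nA: "n - 1 = length A" using n CC by simp
    show ?thesis unfolding nA H_def CC using R3[of A] by (cases y) (simp_all add: sg_def fr_def)
  qed
  have tel: "(\<Sum>i<n-1. H (Suc i) - H i) = H (n-1) - H 0" by (rule sum_lessThan_telescope)
  have s: "(\<Sum>i<n-1. q i) - fr C * (\<Sum>i<n-1. p i) = H (n-1) - H 0"
    unfolding sum_distrib_left sum_subtractf[symmetric] using bond tel by simp
  have "real (preimage_count n C) = fr C" using pc_F[OF n] by (simp add: fr_def)
  moreover have Ls: "(\<Sum>C'\<in>configs n. W 1 1 C C') = (if \<not> hd C then 1 else 0) + (if last C then 1 else 0) + (\<Sum>i<n-1. p i)"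
    using Lsum[OF n assms(1)] unfolding p_def .
  moreover have Rs: "(\<Sum>C'\<in>configs n. real (preimage_count n C') * W 1 1 C' C) =
    (if hd C then fr (False # tl C) else 0) + (if \<not> last C then fr (butlast C @ [True]) else 0) + (\<Sum>i<n-1. q i)"
    using Rsum[OF n assms(1)] unfolding q_def .
  ultimately show ?thesis
    using left right s by (simp only: distrib_left)
qed

end
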